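(* Let $\mathfrak{R}$ be a complete rewriting system on $\Sigma$ and let $(w,r_1,r_2)$ be a triple, where $\ell_1$ and $\ell_2$ denote the left-hand sides of the rules $r_1$ and $r_2$ respectively. If $\mathrm{pre}(\ell_2)\cap\mathrm{suf}(\ell_1)=\emptyset$ or $\mathrm{pre}(\ell_1)\cap\mathrm{suf}(\ell_2)=\emptyset$, then the triple $(w,r_1,r_2)$ is $\tilde c$-defined.
   Context: $\Sigma^*$ is the free monoid on $\Sigma$; a rewriting system is a set of rules $l\to r$ with $l,r\in\Sigma^*$, complete meaning terminating and confluent; a rule $l\to r$ can be applied to a word if $l$ is a subword (factor) of it. A triple $(w,r_1,r_2)$ consists of a word $w$ and rules $r_1,r_2\in\mathfrak{R}$ such that $r_1$ can be applied to some cyclic conjugate of $w$ and $r_2$ can be applied to some (possibly different) cyclic conjugate of $w$ (cyclic conjugates taken in $\Sigma^*$: $ab$ and $ba$). The triple is $\tilde c$-defined if some single cyclic conjugate of $w$ admits application of both $r_1$ and $r_2$. For a word $w=x_1x_2\cdots x_k$ with letters $x_i\in\Sigma$, $\mathrm{pre}(w)=\{x_1,x_1x_2,\dots,x_1\cdots x_k\}$ (nonempty prefixes) and $\mathrm{suf}(w)=\{x_k,x_{k-1}x_k,\dots,x_1\cdots x_k\}$ (nonempty suffixes). *)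

theory Defs
  imports Main "HOL-Library.Sublist"
begin

type_synonym 'a rule = "'a list \<times> 'a list"

definition words :: "'a set \<Rightarrow> 'a list set" where
  "words \<Sigma> = lists \<Sigma>"

definition rstep :: "'a rule set \<Rightarrow> ('a list \<times> 'a list) set" where
  "rstep R = {(u, v). \<exists>x y l r. (l, r) \<in> R \<and> u = x @ l @ y \<and> v = x @ r @ y}"

definition terminating :: "'a rule set \<Rightarrow> bool" where
  "terminating R \<longleftrightarrow> wf ((rstep R)\<inverse>)"

definition confluent :: "'a rule set \<Rightarrow> bool" where
  "confluent R \<longleftrightarrow> (\<forall>u v1 v2. (u, v1) \<in> (rstep R)\<^sup>* \<and> (u, v2) \<in> (rstep R)\<^sup>* \<longrightarrow>
       (\<exists>z. (v1, z) \<in> (rstep R)\<^sup>* \<and> (v2, z) \<in> (rstep R)\<^sup>*))"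

definition rewriting_system :: "'a set \<Rightarrow> 'a rule set \<Rightarrow> bool" where
  "rewriting_system \<Sigma> R \<longleftrightarrow> (\<forall>(l, r) \<in> R. l \<in> words \<Sigma> \<and> r \<in> words \<Sigma>)"

definition complete_rs :: "'a set \<Rightarrow> 'a rule set \<Rightarrow> bool" where
  "complete_rs \<Sigma> R \<longleftrightarrow> rewriting_system \<Sigma> R \<and> terminating R \<and> confluent R"

definition applicable :: "'a rule \<Rightarrow> 'a list \<Rightarrow> bool" where
  "applicable \<rho> u \<longleftrightarrow> sublist (fst \<rho>) u"

definition cyc_conj :: "'a list \<Rightarrow> 'a list set" where
  "cyc_conj w = {v. \<exists>a b. w = a @ b \<and> v = b @ a}"

definition is_triple :: "'a set \<Rightarrow> 'a rule set \<Rightarrow> 'a list \<Rightarrow> 'a rule \<Rightarrow> 'a rule \<Rightarrow> bool" where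
  "is_triple \<Sigma> R w r1 r2 \<longleftrightarrow> w \<in> words \<Sigma> \<and> r1 \<in> R \<and> r2 \<in> R \<and>
     (\<exists>v \<in> cyc_conj w. applicable r1 v) \<and> (\<exists>v \<in> cyc_conj w. applicable r2 v)"

definition c_tilde_defined :: "'a list \<Rightarrow> 'a rule \<Rightarrow> 'a rule \<Rightarrow> bool" where
  "c_tilde_defined w r1 r2 \<longleftrightarrow> (\<exists>v \<in> cyc_conj w. applicable r1 v \<and> applicable r2 v)"

definition pre :: "'a list \<Rightarrow> 'a list set" where
  "pre w = {p. prefix p w \<and> p \<noteq> []}"

definition suf :: "'a list \<Rightarrow> 'a list set" where
  "suf w = {s. suffix s w \<and> s \<noteq> []}"

end

theory Submission
  imports Defs
begin

lemma sub_iff: "sublist l v \<longleftrightarrow> (\<exists>p. p + length l \<le> length v \<and> (\<forall>t<length l. l!t = v!(p+t)))"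
proof
  assume "sublist l v"
  then obtain ps ss where v: "v = ps @ l @ ss" by (auto simp: sublist_def)
  show "\<exists>p. p + length l \<le> length v \<and> (\<forall>t<length l. l!t = v!(p+t))"
    by (rule exI[of _ "length ps"]) (simp add: v nth_append)
next
  assume "\<exists>p. p + length l \<le> length v \<and> (\<forall>t<length l. l!t = v!(p+t))"
  then obtain p where p: "p + length l \<le> length v" "\<forall>t<length l. l!t = v!(p+t)" by blast
  have "take (length l) (drop p v) = l"
    by (rule nth_equalityI) (use p in auto)
  hence "v = take p v @ l @ drop (length l) (drop p v)"
    by (metis append_take_drop_id)
  thus "sublist l v" unfolding sublist_def by blast
qed

definition occ :: "'a list \<Rightarrow> 'a list \<Rightarrow> nat \<Rightarrow> bool" where
  "occ w l i \<longleftrightarrow> length l \<le> length w \<and> (\<forall>t<length l. l!t = w!((i+t) mod length w))"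

lemma rot_in: "rotate c w \<in> cyc_conj w"
  unfolding cyc_conj_def rotate_drop_take
  by (rule CollectI, rule exI[of _ "take (c mod length w) w"], rule exI[of _ "drop (c mod length w) w"]) simp

lemma occ_of_sub:
  assumes "w \<noteq> []" "sublist l (rotate c w)"
  shows "occ w l (c + (SOME p. p + length l \<le> length w \<and> (\<forall>t<length l. l!t = rotate c w!(p+t))))"
proof -
  from assms(2) have "\<exists>p. p + length l \<le> length w \<and> (\<forall>t<length l. l!t = rotate c w!(p+t))"
    by (simp add: sub_iff)
  then have h: "(\<lambda>p. p + length l \<le> length w \<and> (\<forall>t<length l. l!t = rotate c w!(p+t))) (SOME p. p + length l \<le> length w \<and> (\<forall>t<length l. l!t = rotate c w!(p+t)))"
    by (rule someI_ex)
  define p where "p = (SOME p. p + length l \<le> length w \<and> (\<forall>t<length l. l!t = rotate c w!(p+t)))"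
  from h have h1: "p + length l \<le> length w" and h2: "\<forall>t<length l. l!t = rotate c w!(p+t)"
    unfolding p_def by auto
  show ?thesis unfolding p_def[symmetric] occ_def
  proof (intro conjI allI impI)
    show "length l \<le> length w" using h1 by simp
    fix t assume t: "t < length l"
    then have "l!t = rotate c w!(p+t)" using h2 by simp
    also have "\<dots> = w ! ((c + (p+t)) mod length w)" using t h1 by (simp add: nth_rotate)
    finally show "l!t = w!((c+p+t) mod length w)" by (simp add: add.assoc)
  qed
qed

lemma occ_ex:
  assumes "w \<noteq> []" "v \<in> cyc_conj w" "sublist l v"
  shows "\<exists>i. i < length w \<and> occ w l i"
proof -
  obtain a b where ab: "w = a @ b" "v = b @ a" using assms(2) unfolding cyc_conj_def by blast
  have "v = rotate (length a) w" using ab by (simp add: rotate_append)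
  then have "sublist l (rotate (length a) w)" using assms(3) by simp
  from occ_of_sub[OF assms(1) this] obtain i where o: "occ w l i" by (rule that)
  have md: "\<And>t. (i mod length w + t) mod length w = (i + t) mod length w" by (rule mod_add_left_eq)
  have "occ w l (i mod length w)" using o unfolding occ_def md by simp
  moreover have "i mod length w < length w" using assms(1) by simp
  ultimately show ?thesis by blast
qed

lemma sub_of_occ:
  assumes "w \<noteq> []" "occ w l i" "c \<le> i" "i + length l \<le> c + length w"
  shows "sublist l (rotate c w)"
  unfolding sub_iff
proof (intro exI[of _ "i - c"] conjI allI impI)
  show "i - c + length l \<le> length (rotate c w)" using assms by simp
  fix t assume t: "t < length l"
  have "rotate c w ! (i - c + t) = w ! ((c + (i - c + t)) mod length w)"
    using t assms by (simp add: nth_rotate)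
  also have "c + (i - c + t) = i + t" using assms by simp
  finally show "l ! t = rotate c w ! (i - c + t)" using assms(2) t unfolding occ_def by simp
qed

lemma occ_shift: "occ w l i \<Longrightarrow> occ w l (i + length w)"
proof -
  assume o: "occ w l i"
  have "\<And>t. (i + length w + t) mod length w = (i + t) mod length w"
    by (metis add.commute add.left_commute mod_add_self2)
  then show ?thesis using o unfolding occ_def by simp
qed

lemma core:
  assumes w: "w \<noteq> []" and o1: "occ w l1 i" and o2: "occ w l2 j"
    and ij: "i \<le> j" "j < length w"
  shows "(\<exists>c. sublist l1 (rotate c w) \<and> sublist l2 (rotate c w)) \<or>
         (pre l2 \<inter> suf l1 \<noteq> {} \<and> pre l1 \<inter> suf l2 \<noteq> {})"
proof -
  let ?n = "length w"
  have L1: "length l1 \<le> ?n" and L2: "length l2 \<le> ?n" using o1 o2 unfolding occ_def by auto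
  show ?thesis
  proof (cases "j + length l2 \<le> i + ?n")
    case True
    have "sublist l1 (rotate i w)" by (rule sub_of_occ[OF w o1]) (use L1 in simp_all)
    moreover have "sublist l2 (rotate i w)" by (rule sub_of_occ[OF w o2]) (use True ij in simp_all)
    ultimately show ?thesis by blast
  next
    case F1: False
    show ?thesis
    proof (cases "i + ?n + length l1 \<le> j + ?n")
      case True
      have "sublist l1 (rotate j w)" by (rule sub_of_occ[OF w occ_shift[OF o1]]) (use True ij in simp_all)
      moreover have "sublist l2 (rotate j w)" by (rule sub_of_occ[OF w o2]) (use L2 in simp_all)
      ultimately show ?thesis by blast
    next
      case F2: False
      define k where "k = j - i"
      define m where "m = length l1 - k"
      have eq1: "drop k l1 = take m l2"
      proof (rule nth_equalityI)
        show "length (drop k l1) = length (take m l2)" using F1 F2 L1 L2 ij by (simp add: m_def k_def)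
        fix t assume t: "t < length (drop k l1)"
        have tl2: "t < length l2" using t F1 F2 L1 ij by (simp add: k_def)
        have "drop k l1 ! t = l1 ! (k+t)" using t by simp
        also have "\<dots> = w ! ((i + (k+t)) mod ?n)" using o1 t unfolding occ_def by simp
        also have "i + (k+t) = j + t" using ij by (simp add: k_def)
        also have "w ! ((j+t) mod ?n) = l2 ! t" using o2 tl2 unfolding occ_def by simp
        also have "\<dots> = take m l2 ! t" using t by (simp add: m_def)
        finally show "drop k l1 ! t = take m l2 ! t" .
      qed
      have ne1: "drop k l1 \<noteq> []" using F2 ij by (simp add: k_def)
      have "drop k l1 \<in> pre l2 \<inter> suf l1"
      proof -
        have "suffix (drop k l1) l1" by (rule suffix_drop)
        moreover have "prefix (drop k l1) l2" unfolding eq1 by (rule take_is_prefix)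
        ultimately show ?thesis unfolding pre_def suf_def using ne1 by blast
      qed
      then have A: "pre l2 \<inter> suf l1 \<noteq> {}" by blast
      define k' where "k' = i + ?n - j"
      define m' where "m' = length l2 - k'"
      have eq2: "drop k' l2 = take m' l1"
      proof (rule nth_equalityI)
        show "length (drop k' l2) = length (take m' l1)" using F1 F2 L1 L2 ij by (simp add: m'_def k'_def)
        fix t assume t: "t < length (drop k' l2)"
        have tl1: "t < length l1" using t F1 F2 L2 ij by (simp add: k'_def)
        have "drop k' l2 ! t = l2 ! (k'+t)" using t by simp
        also have "\<dots> = w ! ((j + (k'+t)) mod ?n)" using o2 t unfolding occ_def by simp
        also have "j + (k'+t) = i + t + ?n" using ij by (simp add: k'_def)
        also have "w ! ((i + t + ?n) mod ?n) = w ! ((i+t) mod ?n)" by simp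
        also have "\<dots> = l1 ! t" using o1 tl1 unfolding occ_def by simp
        also have "\<dots> = take m' l1 ! t" using t by (simp add: m'_def k'_def)
        finally show "drop k' l2 ! t = take m' l1 ! t" .
      qed
      have ne2: "drop k' l2 \<noteq> []" using F1 ij by (simp add: k'_def)
      have "drop k' l2 \<in> pre l1 \<inter> suf l2"
      proof -
        have "suffix (drop k' l2) l2" by (rule suffix_drop)
        moreover have "prefix (drop k' l2) l1" unfolding eq2 by (rule take_is_prefix)
        ultimately show ?thesis unfolding pre_def suf_def using ne2 by blast
      qed
      then have B: "pre l1 \<inter> suf l2 \<noteq> {}" by blast
      show ?thesis using A B by simp
    qed
  qed
qed

theorem lemma5p2:
  fixes \<Sigma> :: "'a set" and R :: "'a rule set" and w :: "'a list"
    and r1 r2 :: "'a rule"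
  assumes "complete_rs \<Sigma> R"
    and "is_triple \<Sigma> R w r1 r2"
    and "pre (fst r2) \<inter> suf (fst r1) = {} \<or> pre (fst r1) \<inter> suf (fst r2) = {}"
  shows "c_tilde_defined w r1 r2"
proof -
  obtain v1 v2 where v1: "v1 \<in> cyc_conj w" "sublist (fst r1) v1"
    and v2: "v2 \<in> cyc_conj w" "sublist (fst r2) v2"
    using assms(2) unfolding is_triple_def applicable_def by blast
  show ?thesis
  proof (cases "w = []")
    case True
    then have "v1 = []" "v2 = []" using v1 v2 unfolding cyc_conj_def by auto
    then show ?thesis using v1 v2 unfolding c_tilde_defined_def applicable_def by auto
  next
    case False
    obtain i where i: "i < length w" "occ w (fst r1) i" using occ_ex[OF False v1] by blast
    obtain j where j: "j < length w" "occ w (fst r2) j" using occ_ex[OF False v2] by blast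
    have "\<exists>c. sublist (fst r1) (rotate c w) \<and> sublist (fst r2) (rotate c w)"
    proof (cases "i \<le> j")
      case True
      from core[OF False i(2) j(2) True j(1)] assms(3) show ?thesis by argo
    next
      case F: False
      then have "j \<le> i" by simp
      from core[OF False j(2) i(2) this i(1)] assms(3) show ?thesis by blast
    qed
    then show ?thesis unfolding c_tilde_defined_def applicable_def using rot_in by blast
  qed
qed

end
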